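(* Let $K$ be an arbitrary field, $n\ge1$, and $m=\lfloor n/2\rfloor+1$. Then every $m\times m$ minor of the generic matrix $\Phi$ lies in the ideal of $A$ generated by $T_1,\dots,T_n$ and the entries of $\Phi^2$.
   Context: $A=K[\Phi_{a,b}:1\le a,b\le n]$ is the polynomial ring in the entries of the generic $n\times n$ matrix $\Phi$, and $T_i$ is the sum of all principal $i\times i$ minors of $\Phi$. *)

theory Defs
  imports "HOL-Library.Poly_Mapping" "Jordan_Normal_Form.Determinant" "Jordan_Normal_Form.DL_Submatrix"
begin

text \<open>The polynomial ring A = K[Phi_ab] in the n^2 variables Phi_(a,b), 0 <= a,b < n,
  represented as finitely supported maps from monomials (finitely supported exponent
  vectors indexed by pairs of naturals) to coefficients.\<close>
type_synonym 'a mpoly = "((nat \<times> nat) \<Rightarrow>\<^sub>0 nat) \<Rightarrow>\<^sub>0 'a"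

definition Var :: "nat \<times> nat \<Rightarrow> 'a::comm_ring_1 mpoly" where
  "Var ab = Poly_Mapping.single (Poly_Mapping.single ab 1) 1"

definition generic_mat :: "nat \<Rightarrow> 'a::comm_ring_1 mpoly mat" where
  "generic_mat n = mat n n (\<lambda>(a,b). Var (a,b))"

definition T_coef :: "nat \<Rightarrow> nat \<Rightarrow> 'a::comm_ring_1 mpoly" where
  "T_coef n i = (\<Sum>S\<in>{S. S \<subseteq> {0..<n} \<and> card S = i}. det (submatrix (generic_mat n) S S))"

definition ideal_gen :: "'a::comm_ring_1 set \<Rightarrow> 'a set" where
  "ideal_gen G = {f. \<exists>S c. finite S \<and> S \<subseteq> G \<and> f = (\<Sum>g\<in>S. c g * g)}"

end

theory Submission
  imports Defs
begin


definition is_ideal :: "'a::comm_ring_1 set \<Rightarrow> bool" where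
  "is_ideal J \<longleftrightarrow> 0 \<in> J \<and> (\<forall>x\<in>J. \<forall>y\<in>J. x + y \<in> J) \<and> (\<forall>x\<in>J. \<forall>r. r * x \<in> J)"

lemma pick_image_mono:
  fixes f :: "nat \<Rightarrow> nat"
  assumes f: "strict_mono f" and fin: "finite T" and a: "a < card T"
  shows "pick (f ` T) a = f (pick T a)"
proof -
  define x where "x = pick T a"
  have xT: "x \<in> T" using pick_in_set a unfolding x_def by auto
  have cx: "card {y\<in>T. y < x} = a" using card_pick a unfolding x_def by auto
  have inj: "inj f" using f strict_mono_imp_inj_on by blast
  have "{z\<in>f ` T. z < f x} = f ` {y\<in>T. y < x}"
    using f by (auto simp: strict_mono_less)
  hence "card {z\<in>f ` T. z < f x} = a"
    using cx inj by (simp add: card_image inj_on_subset)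
  hence "pick (f ` T) a = pick (f ` T) (card {z\<in>f ` T. z < f x})" by simp
  also have "\<dots> = f x" using xT by (intro pick_card_in_set) auto
  finally show ?thesis unfolding x_def .
qed

lemma pick_upto: "i < n \<Longrightarrow> pick {0..<n} i = i"
proof -
  assume "i < n"
  have "{a\<in>{0..<n}. a < i} = {0..<i}" using \<open>i<n\<close> by auto
  hence "pick {0..<n} (card {a\<in>{0..<n}. a < i}) = i" using pick_card_in_set[of i "{0..<n}"] \<open>i<n\<close> by auto
  thus ?thesis using \<open>{a\<in>{0..<n}. a < i} = {0..<i}\<close> by simp
qed

lemma set_lt_in: "T \<subseteq> {0..<n} \<Longrightarrow> {i. i < n \<and> i \<in> T} = T" by auto

lemma dim_submatrix_sub:
  assumes A: "A \<in> carrier_mat n m" and I: "I \<subseteq> {0..<n}" and J: "J \<subseteq> {0..<m}"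
  shows "dim_row (submatrix A I J) = card I" "dim_col (submatrix A I J) = card J"
proof -
  have d: "dim_row A = n" "dim_col A = m" using A by auto
  show "dim_row (submatrix A I J) = card I" unfolding dim_submatrix d set_lt_in[OF I] ..
  show "dim_col (submatrix A I J) = card J" unfolding dim_submatrix d set_lt_in[OF J] ..
qed

lemma submatrix_index_sub:
  assumes A: "A \<in> carrier_mat n m" and I: "I \<subseteq> {0..<n}" and J: "J \<subseteq> {0..<m}"
  and a: "a < card I" and b: "b < card J"
  shows "submatrix A I J $$ (a, b) = A $$ (pick I a, pick J b)"
proof -
  have d: "dim_row A = n" "dim_col A = m" using A by auto
  show ?thesis by (rule submatrix_index) (unfold d set_lt_in[OF I] set_lt_in[OF J], fact a, fact b)
qed

lemma submatrix_carrier: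
  assumes "A \<in> carrier_mat n n" "T \<subseteq> {0..<n}"
  shows "submatrix A T T \<in> carrier_mat (card T) (card T)"
  using dim_submatrix_sub[OF assms assms(2)] unfolding carrier_mat_def by simp

lemma submatrix_full:
  assumes "A \<in> carrier_mat n n"
  shows "submatrix A {0..<n} {0..<n} = A"
proof -
  have n: "{0..<n} \<subseteq> {0..<n}" by simp
  show ?thesis
  proof (rule eq_matI)
    show "dim_row (submatrix A {0..<n} {0..<n}) = dim_row A" "dim_col (submatrix A {0..<n} {0..<n}) = dim_col A"
      using dim_submatrix_sub[OF assms n n] assms by auto
    fix i j assume "i < dim_row A" "j < dim_col A"
    hence ij: "i < n" "j < n" using assms by auto
    show "submatrix A {0..<n} {0..<n} $$ (i, j) = A $$ (i, j)"
      using submatrix_index_sub[OF assms n n] ij by (simp add: pick_upto)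
  qed
qed

lemma insert_index_strict_mono: "strict_mono (insert_index j)"
  by (auto simp: strict_mono_def insert_index_def)

lemma det_unit_cols:
  fixes C :: "'a::comm_ring_1 mat"
  assumes "C \<in> carrier_mat n n" and "T \<subseteq> {0..<n}"
  and "\<And>i j. i < n \<Longrightarrow> j < n \<Longrightarrow> j \<notin> T \<Longrightarrow> C $$ (i,j) = (if i = j then d j else 0)"
  shows "det C = (\<Prod>j\<in>{0..<n} - T. d j) * det (submatrix C T T)"
  using assms
proof (induction n arbitrary: C T d)
  case 0
  hence "T = {}" by auto
  have "submatrix C T T \<in> carrier_mat 0 0" using submatrix_carrier[OF 0(1,2)] \<open>T = {}\<close> by simp
  then show ?case using 0 by simp
next
  case (Suc n)
  show ?case
  proof (cases "T = {0..<Suc n}")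
    case True
    then show ?thesis using submatrix_full[OF Suc.prems(1)] by simp
  next
    case False
    have "\<not> {0..<Suc n} \<subseteq> T" using False Suc.prems(2) by auto
    then obtain j where j0: "j \<in> {0..<Suc n}" "j \<notin> T" by blast
    hence j: "j < Suc n" "j \<notin> T" by auto
    let ?ins = "insert_index j"
    define D where "D = mat_delete C j j"
    have D: "D \<in> carrier_mat n n" using mat_delete_carrier[OF Suc.prems(1)] unfolding D_def by simp
    have Dij: "D $$ (a, b) = C $$ (?ins a, ?ins b)" if "a < n" "b < n" for a b
      using mat_delete_index[OF Suc.prems(1) j(1) j(1) that] unfolding D_def by simp
    have ins_lt: "?ins a < Suc n" if "a < n" for a using that by (auto simp: insert_index_def)
    have ins_inj: "inj ?ins" using insert_index_strict_mono strict_mono_imp_inj_on by blast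
    define T' where "T' = {a. a < n \<and> ?ins a \<in> T}"
    have T'n: "T' \<subseteq> {0..<n}" unfolding T'_def by auto
    have TT': "T = ?ins ` T'"
    proof
      show "?ins ` T' \<subseteq> T" unfolding T'_def by auto
      show "T \<subseteq> ?ins ` T'"
      proof
        fix x assume x: "x \<in> T"
        hence "x \<noteq> j" "x < Suc n" using j Suc.prems(2) by auto
        define y where "y = delete_index j x"
        have "?ins y = x" unfolding y_def using \<open>x \<noteq> j\<close> by (simp add: insert_delete_index)
        moreover have "y < n" using \<open>x \<noteq> j\<close> \<open>x < Suc n\<close> j unfolding y_def delete_index_def by auto
        ultimately show "x \<in> ?ins ` T'" unfolding T'_def using x by force
      qed
    qed
    have IH: "det D = (\<Prod>b\<in>{0..<n} - T'. d (?ins b)) * det (submatrix D T' T')"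
    proof (rule Suc.IH[OF D T'n])
      fix a b assume ab: "a < n" "b < n" "b \<notin> T'"
      hence "?ins b \<notin> T" unfolding T'_def by auto
      then have "C $$ (?ins a, ?ins b) = (if ?ins a = ?ins b then d (?ins b) else 0)"
        using Suc.prems(3) ins_lt ab by auto
      also have "\<dots> = (if a = b then d (?ins b) else 0)" using ins_inj by (auto dest: injD)
      finally show "D $$ (a, b) = (if a = b then d (?ins b) else 0)" using Dij ab by simp
    qed
    have lap: "det C = d j * det D"
    proof -
      have "det C = (\<Sum>i<Suc n. C $$ (i,j) * cofactor C i j)"
        using laplace_expansion_column[OF Suc.prems(1) j(1)] .
      also have "\<dots> = (\<Sum>i<Suc n. (if i = j then d j * cofactor C j j else 0))"
        using Suc.prems(3) j by (intro sum.cong) auto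
      also have "\<dots> = d j * cofactor C j j" using j by simp
      also have "cofactor C j j = det D" unfolding cofactor_def D_def
        by (simp add: power_even_eq[symmetric] mult_2[symmetric] )
      finally show ?thesis .
    qed
    have prod: "(\<Prod>j\<in>{0..<Suc n} - T. d j) = d j * (\<Prod>b\<in>{0..<n} - T'. d (?ins b))"
    proof -
      have "(\<Prod>j\<in>{0..<Suc n} - T. d j) = d j * (\<Prod>x\<in>({0..<Suc n} - T) - {j}. d x)"
        using j by (subst prod.remove[of _ j]) auto
      also have "({0..<Suc n} - T) - {j} = ?ins ` ({0..<n} - T')"
      proof
        show "?ins ` ({0..<n} - T') \<subseteq> ({0..<Suc n} - T) - {j}"
          using ins_lt unfolding T'_def by (auto simp: insert_index_def)
        show "({0..<Suc n} - T) - {j} \<subseteq> ?ins ` ({0..<n} - T')"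
        proof
          fix x assume x: "x \<in> ({0..<Suc n} - T) - {j}"
          define y where "y = delete_index j x"
          have "?ins y = x" unfolding y_def using x by (simp add: insert_delete_index)
          moreover have "y < n" using x j unfolding y_def delete_index_def by auto
          ultimately show "x \<in> ?ins ` ({0..<n} - T')" unfolding T'_def using x by force
        qed
      qed
      also have "(\<Prod>x\<in>?ins ` ({0..<n} - T'). d x) = (\<Prod>b\<in>{0..<n} - T'. d (?ins b))"
        using ins_inj by (subst prod.reindex) (auto intro: inj_on_subset)
      finally show ?thesis .
    qed
    have fin: "finite T'" using T'n finite_subset by blast
    have cardT: "card T = card T'" using TT' ins_inj by (simp add: card_image inj_on_subset)
    have sub: "submatrix D T' T' = submatrix C T T"
    proof (rule eq_matI)
      note dD = dim_submatrix_sub[OF D T'n T'n] and dC = dim_submatrix_sub[OF Suc.prems(1,2,2)]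
      show "dim_row (submatrix D T' T') = dim_row (submatrix C T T)"
        unfolding dD dC cardT ..
      show "dim_col (submatrix D T' T') = dim_col (submatrix C T T)"
        unfolding dD dC cardT ..
      fix a b assume ab: "a < dim_row (submatrix C T T)" "b < dim_col (submatrix C T T)"
      hence ab': "a < card T'" "b < card T'" unfolding dC cardT by auto
      have pa: "pick T a = ?ins (pick T' a)" "pick T b = ?ins (pick T' b)"
        using pick_image_mono[OF insert_index_strict_mono fin] ab' TT' by auto
      have lt: "pick T' a < n" "pick T' b < n" using pick_in_set[of a T'] pick_in_set[of b T'] ab' T'n by auto
      have "submatrix D T' T' $$ (a, b) = D $$ (pick T' a, pick T' b)"
        by (rule submatrix_index_sub[OF D T'n T'n ab'])
      also have "\<dots> = C $$ (pick T a, pick T b)" unfolding pa using Dij lt by simp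
      also have "\<dots> = submatrix C T T $$ (a, b)"
        using submatrix_index_sub[OF Suc.prems(1,2,2)] ab' cardT by simp
      finally show "submatrix D T' T' $$ (a, b) = submatrix C T T $$ (a, b)" .
    qed
    show ?thesis using lap IH prod sub by (simp add: mult.assoc)
  qed
qed





lemma ideal_0: "is_ideal J \<Longrightarrow> 0 \<in> J" unfolding is_ideal_def by auto
lemma ideal_add: "is_ideal J \<Longrightarrow> x \<in> J \<Longrightarrow> y \<in> J \<Longrightarrow> x + y \<in> J" unfolding is_ideal_def by auto
lemma ideal_mult: "is_ideal J \<Longrightarrow> x \<in> J \<Longrightarrow> r * x \<in> J" unfolding is_ideal_def by auto
lemma ideal_mult2: "is_ideal J \<Longrightarrow> x \<in> J \<Longrightarrow> x * r \<in> J" unfolding is_ideal_def by (metis mult.commute)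
lemma ideal_uminus: "is_ideal J \<Longrightarrow> x \<in> J \<Longrightarrow> - x \<in> J"
  using ideal_mult[of J x "-1"] by simp
lemma ideal_diff: "is_ideal J \<Longrightarrow> x \<in> J \<Longrightarrow> y \<in> J \<Longrightarrow> x - y \<in> J"
  using ideal_add[of J x "-y"] ideal_uminus[of J y] by simp
lemma ideal_sum: "is_ideal J \<Longrightarrow> (\<And>a. a \<in> A \<Longrightarrow> f a \<in> J) \<Longrightarrow> sum f A \<in> J"
  by (induction A rule: infinite_finite_induct) (auto simp: ideal_0 ideal_add)

lemma ideal_prod_cong:
  assumes J: "is_ideal J" and fin: "finite A" and h: "\<And>i. i \<in> A \<Longrightarrow> f i - g i \<in> J"
  shows "prod f A - prod g A \<in> J"
  using fin h
proof (induction A rule: finite_induct)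
  case empty
  then show ?case using ideal_0[OF J] by simp
next
  case (insert x F)
  have eq: "prod f (insert x F) - prod g (insert x F) = f x * (prod f F - prod g F) + (f x - g x) * prod g F"
    using insert by (simp add: algebra_simps)
  have h1: "prod f F - prod g F \<in> J" using insert by auto
  have h2: "f x - g x \<in> J" using insert by auto
  show ?case unfolding eq
    by (rule ideal_add[OF J, OF ideal_mult[OF J h1] ideal_mult2[OF J h2]])
qed

lemma ideal_sum_cong:
  assumes J: "is_ideal J" and h: "\<And>i. i \<in> A \<Longrightarrow> f i - g i \<in> J"
  shows "sum f A - sum g A \<in> J"
proof -
  have "sum f A - sum g A = (\<Sum>i\<in>A. f i - g i)" by (simp add: sum_subtractf)
  thus ?thesis using ideal_sum[OF J h] by simp
qed

lemma det_cong:
  fixes A B :: "'a::comm_ring_1 mat"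
  assumes J: "is_ideal J" and A: "A \<in> carrier_mat n n" and B: "B \<in> carrier_mat n n"
  and h: "\<And>i j. i < n \<Longrightarrow> j < n \<Longrightarrow> A $$ (i,j) - B $$ (i,j) \<in> J"
  shows "det A - det B \<in> J"
proof -
  have "det A - det B = (\<Sum>p\<in>{p. p permutes {0..<n}}. signof p * (\<Prod>i = 0..<n. A $$ (i, p i)))
      - (\<Sum>p\<in>{p. p permutes {0..<n}}. signof p * (\<Prod>i = 0..<n. B $$ (i, p i)))"
    by (simp only: det_def'[OF A] det_def'[OF B])
  also have "\<dots> \<in> J"
  proof (rule ideal_sum_cong[OF J])
    fix p assume p: "p \<in> {p. p permutes {0..<n}}"
    have "(\<Prod>i = 0..<n. A $$ (i, p i)) - (\<Prod>i = 0..<n. B $$ (i, p i)) \<in> J"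
    proof (rule ideal_prod_cong[OF J])
      fix i assume i: "i \<in> {0..<n}"
      have "p i \<in> {0..<n}" using p i by (simp add: permutes_in_image)
      thus "A $$ (i, p i) - B $$ (i, p i) \<in> J" using h i by simp
    qed simp
    hence "signof p * ((\<Prod>i = 0..<n. A $$ (i, p i)) - (\<Prod>i = 0..<n. B $$ (i, p i))) \<in> J"
      by (rule ideal_mult[OF J])
    thus "signof p * (\<Prod>i = 0..<n. A $$ (i, p i)) - signof p * (\<Prod>i = 0..<n. B $$ (i, p i)) \<in> J"
      by (simp add: algebra_simps)
  qed
  finally show ?thesis .
qed




lemma jacobi_principal:
  fixes M N :: "'a::comm_ring_1 mat"
  assumes J: "is_ideal J" and M: "M \<in> carrier_mat n n" and N: "N \<in> carrier_mat n n"
  and S: "S \<subseteq> {0..<n}"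
  and MN: "\<And>i j. i < n \<Longrightarrow> j < n \<Longrightarrow> (M * N) $$ (i,j) - (if i = j then c else 0) \<in> J"
  shows "det M * det (submatrix N S S) - c ^ card S * det (submatrix M ({0..<n} - S) ({0..<n} - S)) \<in> J"
proof -
  define B where "B = mat n n (\<lambda>(i,j). if j \<in> S then N $$ (i,j) else if i = j then 1 else 0)"
  have B: "B \<in> carrier_mat n n" unfolding B_def by simp
  have detB: "det B = det (submatrix N S S)"
  proof -
    have "det B = (\<Prod>j\<in>{0..<n} - S. 1) * det (submatrix B S S)"
      by (rule det_unit_cols[OF B S]) (auto simp: B_def)
    also have "submatrix B S S = submatrix N S S"
    proof (rule eq_matI)
      show "dim_row (submatrix B S S) = dim_row (submatrix N S S)"
           "dim_col (submatrix B S S) = dim_col (submatrix N S S)"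
        using dim_submatrix_sub[OF B S S] dim_submatrix_sub[OF N S S] by simp_all
      fix a b assume ab: "a < dim_row (submatrix N S S)" "b < dim_col (submatrix N S S)"
      hence ab': "a < card S" "b < card S" using dim_submatrix_sub[OF N S S] by auto
      have p: "pick S a \<in> S" "pick S b \<in> S" using pick_in_set[of a S] pick_in_set[of b S] ab' by auto
      hence "pick S a < n" "pick S b < n" using S by auto
      thus "submatrix B S S $$ (a, b) = submatrix N S S $$ (a, b)"
        using ab' B N S p submatrix_index_sub[OF B S S ab'] submatrix_index_sub[OF N S S ab'] by (simp add: B_def)
    qed
    finally show ?thesis by simp
  qed
  define C where "C = mat n n (\<lambda>(i,j). if j \<in> S then (if i = j then c else 0) else M $$ (i,j))"
  have C: "C \<in> carrier_mat n n" unfolding C_def by simp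
  have MB: "M * B \<in> carrier_mat n n" using M B by simp
  have MBij: "(M * B) $$ (i,j) = (if j \<in> S then (M * N) $$ (i,j) else M $$ (i,j))" if ij: "i < n" "j < n" for i j
  proof (cases "j \<in> S")
    case True
    have "col B j = col N j" using B N ij True by (intro eq_vecI) (auto simp: B_def)
    then show ?thesis using True M B N ij by simp
  next
    case False
    have "(M * B) $$ (i,j) = (\<Sum>l\<in>{0..<n}. M $$ (i,l) * (if l = j then 1 else 0))"
      using M B ij False by (simp add: scalar_prod_def B_def)
    also have "\<dots> = M $$ (i,j)" using ij by (simp add: if_distrib cong: if_cong)
    finally show ?thesis using False by simp
  qed
  have cong: "det (M * B) - det C \<in> J"
  proof (rule det_cong[OF J MB C])
    fix i j assume ij: "i < n" "j < n"
    show "(M * B) $$ (i,j) - C $$ (i,j) \<in> J"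
      using MBij[OF ij] MN[OF ij] ij ideal_0[OF J] by (auto simp: C_def)
  qed
  have T: "{0..<n} - S \<subseteq> {0..<n}" by auto
  have detC: "det C = c ^ card S * det (submatrix M ({0..<n} - S) ({0..<n} - S))"
  proof -
    have "det C = (\<Prod>j\<in>{0..<n} - ({0..<n} - S). c) * det (submatrix C ({0..<n} - S) ({0..<n} - S))"
      by (rule det_unit_cols[OF C T]) (auto simp: C_def)
    also have "{0..<n} - ({0..<n} - S) = S" using S by auto
    also have "submatrix C ({0..<n} - S) ({0..<n} - S) = submatrix M ({0..<n} - S) ({0..<n} - S)"
    proof (rule eq_matI)
      let ?T = "{0..<n} - S"
      show "dim_row (submatrix C ?T ?T) = dim_row (submatrix M ?T ?T)"
           "dim_col (submatrix C ?T ?T) = dim_col (submatrix M ?T ?T)"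
        using dim_submatrix_sub[OF C T T] dim_submatrix_sub[OF M T T] by simp_all
      fix a b assume ab: "a < dim_row (submatrix M ?T ?T)" "b < dim_col (submatrix M ?T ?T)"
      have ab': "a < card ?T" "b < card ?T" using ab dim_submatrix_sub[OF M T T] by auto
      have p: "pick ?T a \<in> ?T" "pick ?T b \<in> ?T" using pick_in_set[of a ?T] pick_in_set[of b ?T] ab' by auto
      thus "submatrix C ?T ?T $$ (a, b) = submatrix M ?T ?T $$ (a, b)"
        using ab' C M T p submatrix_index_sub[OF C T T ab'] submatrix_index_sub[OF M T T ab'] by (simp add: C_def)
    qed
    finally show ?thesis by simp
  qed
  have "det (M * B) = det M * det B" using det_mult[OF M B] .
  thus ?thesis using cong detB detC by simp
qed



definition Jp :: "'a::comm_ring_1 set \<Rightarrow> 'a poly set" where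
  "Jp J = {p. \<forall>k. coeff p k \<in> J}"

lemma Jp_ideal: assumes J: "is_ideal J" shows "is_ideal (Jp J)"
  unfolding is_ideal_def Jp_def
proof (intro conjI ballI allI; clarsimp)
  show "\<And>k. 0 \<in> J" using ideal_0[OF J] .
  show "\<And>x y k. \<forall>k. coeff x k \<in> J \<Longrightarrow> \<forall>k. coeff y k \<in> J \<Longrightarrow> coeff x k + coeff y k \<in> J"
    using ideal_add[OF J] by blast
  fix x r k assume x: "\<forall>k. coeff x k \<in> J"
  show "coeff (r * x) k \<in> J" unfolding coeff_mult
    by (rule ideal_sum[OF J]) (rule ideal_mult[OF J], use x in auto)
qed

lemma const_hom: "comm_ring_hom (\<lambda>x::'a::comm_ring_1. [:x:])"
  by unfold_locales auto

lemma ev0_hom: "comm_ring_hom (\<lambda>p::'a::comm_ring_1 poly. poly p 0)"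
  by unfold_locales auto

definition Mt :: "nat \<Rightarrow> 'a::comm_ring_1 mat \<Rightarrow> 'a poly mat" where
  "Mt n A = mat n n (\<lambda>(i,j). [:A $$ (i,j):] + (if i = j then [:0,1:] else 0))"

definition Nt :: "nat \<Rightarrow> 'a::comm_ring_1 mat \<Rightarrow> 'a poly mat" where
  "Nt n A = mat n n (\<lambda>(i,j). [:A $$ (i,j):] - (if i = j then [:0,1:] else 0))"

lemma MtNt:
  fixes A :: "'a::comm_ring_1 mat"
  assumes A: "A \<in> carrier_mat n n" and ij: "i < n" "j < n"
  shows "(Mt n A * Nt n A) $$ (i,j) = [:(A * A) $$ (i,j):] + (if i = j then monom (-1) 2 else 0)"
proof -
  let ?t = "[:0,1:] :: 'a poly"
  have "(Mt n A * Nt n A) $$ (i,j) = (\<Sum>l\<in>{0..<n}. ([:A $$ (i,l):] + (if i = l then ?t else 0)) * ([:A $$ (l,j):] - (if l = j then ?t else 0)))"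
    using ij by (simp add: Mt_def Nt_def scalar_prod_def)
  also have "\<dots> = (\<Sum>l\<in>{0..<n}. [:A $$ (i,l) * A $$ (l,j):]) - (\<Sum>l\<in>{0..<n}. (if l = j then [:A $$ (i,l):] * ?t else 0))
      + (\<Sum>l\<in>{0..<n}. (if i = l then ?t * [:A $$ (l,j):] else 0)) - (\<Sum>l\<in>{0..<n}. (if l = i then (if i = j then ?t * ?t else 0) else 0))"
  proof -
    have pt: "([:A $$ (i,l):] + (if i = l then ?t else 0)) * ([:A $$ (l,j):] - (if l = j then ?t else 0))
       = [:A $$ (i,l) * A $$ (l,j):] - (if l = j then [:A $$ (i,l):] * ?t else 0)
         + (if i = l then ?t * [:A $$ (l,j):] else 0) - (if l = i then (if i = j then ?t * ?t else 0) else 0)" for l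
      by (cases "i = l"; cases "l = j") (simp_all add: algebra_simps)
    show ?thesis unfolding pt by (simp only: sum.distrib sum_subtractf)
  qed
  also have "\<dots> = [:(A * A) $$ (i,j):] - [:A $$ (i,j):] * ?t + ?t * [:A $$ (i,j):] - (if i = j then ?t * ?t else 0)"
    using ij A by (simp add: sum_to_poly scalar_prod_def)
  also have "\<dots> = [:(A * A) $$ (i,j):] + (if i = j then monom (-1) 2 else 0)"
    by (simp add: monom_altdef power2_eq_square)
  finally show ?thesis .
qed



definition Bm :: "nat \<Rightarrow> 'a::comm_ring_1 mat \<Rightarrow> nat set \<Rightarrow> 'a poly mat" where
  "Bm n A F = mat n n (\<lambda>(i,j). if j \<in> F then [:A $$ (i,j):] else if i = j then 1 else 0)"

lemma det_Bm:
  fixes A :: "'a::comm_ring_1 mat"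
  assumes A: "A \<in> carrier_mat n n" and F: "F \<subseteq> {0..<n}"
  shows "det (Bm n A F) = [:det (submatrix A F F):]"
proof -
  have B: "Bm n A F \<in> carrier_mat n n" unfolding Bm_def by simp
  have "det (Bm n A F) = (\<Prod>j\<in>{0..<n} - F. 1) * det (submatrix (Bm n A F) F F)"
    by (rule det_unit_cols[OF B F]) (auto simp: Bm_def)
  also have "submatrix (Bm n A F) F F = map_mat (\<lambda>x. [:x:]) (submatrix A F F)"
  proof (rule eq_matI)
    show "dim_row (submatrix (Bm n A F) F F) = dim_row (map_mat (\<lambda>x. [:x:]) (submatrix A F F))"
         "dim_col (submatrix (Bm n A F) F F) = dim_col (map_mat (\<lambda>x. [:x:]) (submatrix A F F))"
      using dim_submatrix_sub[OF B F F] dim_submatrix_sub[OF A F F] by simp_all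
    fix a b assume ab: "a < dim_row (map_mat (\<lambda>x. [:x:]) (submatrix A F F))"
        "b < dim_col (map_mat (\<lambda>x. [:x:]) (submatrix A F F))"
    hence ab': "a < card F" "b < card F" using dim_submatrix_sub[OF A F F] by auto
    have p: "pick F a \<in> F" "pick F b \<in> F" using pick_in_set[of a F] pick_in_set[of b F] ab' by auto
    hence "pick F a < n" "pick F b < n" using F by auto
    thus "submatrix (Bm n A F) F F $$ (a, b) = map_mat (\<lambda>x. [:x:]) (submatrix A F F) $$ (a, b)"
      using ab ab' p submatrix_index_sub[OF B F F ab'] submatrix_index_sub[OF A F F ab'] by (simp add: Bm_def)
  qed
  also have "det (map_mat (\<lambda>x. [:x:]) (submatrix A F F)) = [:det (submatrix A F F):]"
    by (rule comm_ring_hom.hom_det[OF const_hom])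
  finally show ?thesis by simp
qed

lemma det_Mt:
  fixes A :: "'a::comm_ring_1 mat"
  assumes A: "A \<in> carrier_mat n n"
  shows "det (Mt n A) = (\<Sum>F\<in>Pow {0..<n}. monom 1 (n - card F) * det (Bm n A F))"
proof -
  let ?U = "{0..<n}"
  let ?t = "[:0,1:] :: 'a poly"
  have M: "Mt n A \<in> carrier_mat n n" unfolding Mt_def by simp
  have inner: "(\<Prod>j<n. Mt n A $$ (p j, j)) = (\<Sum>F\<in>Pow ?U. monom 1 (n - card F) * (\<Prod>j<n. Bm n A F $$ (p j, j)))"
    if p: "p permutes ?U" for p
  proof -
    have pj: "p j < n" if "j < n" for j using p that by (simp add: permutes_in_image)
    have "(\<Prod>j<n. Mt n A $$ (p j, j)) = (\<Prod>j\<in>?U. [:A $$ (p j, j):] + (if p j = j then ?t else 0))"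
      unfolding lessThan_atLeast0 using pj by (intro prod.cong) (auto simp: Mt_def)
    also have "\<dots> = (\<Sum>F\<in>Pow ?U. (\<Prod>j\<in>F. [:A $$ (p j, j):]) * (\<Prod>j\<in>?U - F. (if p j = j then ?t else 0)))"
      by (rule prod_add) simp
    also have "\<dots> = (\<Sum>F\<in>Pow ?U. monom 1 (n - card F) * (\<Prod>j<n. Bm n A F $$ (p j, j)))"
    proof (rule sum.cong[OF refl])
      fix F assume F: "F \<in> Pow ?U"
      hence FU: "F \<subseteq> ?U" by auto
      have fin: "finite F" using FU finite_subset by blast
      have "(\<Prod>j\<in>?U - F. (if p j = j then ?t else 0)) = (\<Prod>j\<in>?U - F. ?t * (if p j = j then 1 else 0))"
        by (intro prod.cong) auto
      also have "\<dots> = ?t ^ card (?U - F) * (\<Prod>j\<in>?U - F. (if p j = j then 1 else 0))"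
        by (simp only: prod.distrib prod_constant)
      also have "?t ^ card (?U - F) = monom 1 (n - card F)"
        using FU fin by (simp add: card_Diff_subset monom_altdef)
      finally have e1: "(\<Prod>j\<in>?U - F. (if p j = j then ?t else 0)) = monom 1 (n - card F) * (\<Prod>j\<in>?U - F. (if p j = j then 1 else 0))" .
      have "(\<Prod>j<n. Bm n A F $$ (p j, j)) = (\<Prod>j\<in>?U. Bm n A F $$ (p j, j))"
        by (simp add: lessThan_atLeast0)
      also have "\<dots> = (\<Prod>j\<in>?U - F. Bm n A F $$ (p j, j)) * (\<Prod>j\<in>F. Bm n A F $$ (p j, j))"
        using FU by (intro prod.subset_diff) auto
      also have "(\<Prod>j\<in>?U - F. Bm n A F $$ (p j, j)) = (\<Prod>j\<in>?U - F. (if p j = j then 1 else 0))"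
        using pj by (intro prod.cong) (auto simp: Bm_def)
      also have "(\<Prod>j\<in>F. Bm n A F $$ (p j, j)) = (\<Prod>j\<in>F. [:A $$ (p j, j):])"
        using pj FU by (intro prod.cong) (auto simp: Bm_def)
      finally have e2: "(\<Prod>j<n. Bm n A F $$ (p j, j)) = (\<Prod>j\<in>?U - F. (if p j = j then 1 else 0)) * (\<Prod>j\<in>F. [:A $$ (p j, j):])" .
      show "(\<Prod>j\<in>F. [:A $$ (p j, j):]) * (\<Prod>j\<in>?U - F. (if p j = j then ?t else 0)) = monom 1 (n - card F) * (\<Prod>j<n. Bm n A F $$ (p j, j))"
        unfolding e1 e2 by (simp add: mult_ac)
    qed
    finally show ?thesis .
  qed
  have "det (Mt n A) = (\<Sum>p | p permutes ?U. signof p * (\<Prod>j<n. Mt n A $$ (p j, j)))"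
    by (rule det_col[OF M])
  also have "\<dots> = (\<Sum>p | p permutes ?U. \<Sum>F\<in>Pow ?U. monom 1 (n - card F) * (signof p * (\<Prod>j<n. Bm n A F $$ (p j, j))))"
    by (intro sum.cong refl) (simp add: inner sum_distrib_left mult.left_commute)
  also have "\<dots> = (\<Sum>F\<in>Pow ?U. \<Sum>p | p permutes ?U. monom 1 (n - card F) * (signof p * (\<Prod>j<n. Bm n A F $$ (p j, j))))"
    by (rule sum.swap)
  also have "\<dots> = (\<Sum>F\<in>Pow ?U. monom 1 (n - card F) * det (Bm n A F))"
  proof (rule sum.cong[OF refl])
    fix F
    have B: "Bm n A F \<in> carrier_mat n n" unfolding Bm_def by simp
    show "(\<Sum>p | p permutes ?U. monom 1 (n - card F) * (signof p * (\<Prod>j<n. Bm n A F $$ (p j, j)))) = monom 1 (n - card F) * det (Bm n A F)"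
      unfolding det_col[OF B] by (simp add: sum_distrib_left)
  qed
  finally show ?thesis .
qed

lemma coeff_det_Mt:
  fixes A :: "'a::comm_ring_1 mat"
  assumes A: "A \<in> carrier_mat n n" and k: "k < n"
  shows "coeff (det (Mt n A)) k = (\<Sum>S\<in>{S. S \<subseteq> {0..<n} \<and> card S = n - k}. det (submatrix A S S))"
proof -
  let ?U = "{0..<n}"
  have "coeff (det (Mt n A)) k = (\<Sum>F\<in>Pow ?U. coeff (monom 1 (n - card F) * [:det (submatrix A F F):]) k)"
    unfolding det_Mt[OF A] coeff_sum by (intro sum.cong refl) (simp add: det_Bm[OF A])
  also have "\<dots> = (\<Sum>F\<in>Pow ?U. if card F = n - k then det (submatrix A F F) else 0)"
  proof (rule sum.cong[OF refl])
    fix F assume F: "F \<in> Pow ?U"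
    have "card F \<le> n" using F card_mono[of ?U F] by auto
    thus "coeff (monom 1 (n - card F) * [:det (submatrix A F F):]) k = (if card F = n - k then det (submatrix A F F) else 0)"
      using k by (auto simp: coeff_monom_mult coeff_pCons split: nat.splits)
  qed
  also have "\<dots> = (\<Sum>F\<in>{F\<in>Pow ?U. card F = n - k}. det (submatrix A F F))"
    by (rule sum.inter_filter[symmetric]) simp
  also have "{F\<in>Pow ?U. card F = n - k} = {S. S \<subseteq> ?U \<and> card S = n - k}" by auto
  finally show ?thesis .
qed



lemma pick_inj_on: "finite K \<Longrightarrow> inj_on (pick K) {0..<card K}"
  by (auto simp: inj_on_def) (metis nat_neq_iff pick_mono)

lemma card_lt_in: fixes x :: nat assumes "finite K" "x \<in> K" shows "card {y\<in>K. y < x} < card K"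
proof -
  have "x \<notin> {y\<in>K. y < x}" by simp
  hence "{y\<in>K. y < x} \<subset> K" using assms by blast
  thus ?thesis using assms by (intro psubset_card_mono) auto
qed

lemma exists_perm:
  assumes I: "I \<subseteq> {0..<n}" and K: "K \<subseteq> {0..<n}" and c: "card I = card K"
  shows "\<exists>\<pi>. \<pi> permutes {0..<n} \<and> (\<forall>a < card K. \<pi> (pick K a) = pick I a)"
proof -
  have fI: "finite I" and fK: "finite K" using I K finite_subset by blast+
  define f1 where "f1 x = pick I (card {y\<in>K. y < x})" for x
  have f1I: "f1 x \<in> I" if "x \<in> K" for x
    unfolding f1_def using pick_in_set[of _ I] card_lt_in[OF fK that] c by auto
  have inj1: "inj_on f1 K"
  proof (rule inj_onI)
    fix x y assume xy: "x \<in> K" "y \<in> K" "f1 x = f1 y"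
    have "card {z\<in>K. z < x} = card {z\<in>K. z < y}"
      using pick_inj_on[OF fI] card_lt_in[OF fK xy(1)] card_lt_in[OF fK xy(2)] c xy(3)
      unfolding f1_def inj_on_def by auto
    thus "x = y" using pick_card_in_set[OF xy(1)] pick_card_in_set[OF xy(2)] by metis
  qed
  have img1: "f1 ` K = I"
    using f1I inj1 c fI by (intro card_subset_eq) (auto simp: card_image)
  have b1: "bij_betw f1 K I" using inj1 img1 by (simp add: bij_betw_def)
  obtain f2 where b2: "bij_betw f2 ({0..<n} - K) ({0..<n} - I)"
    using finite_same_card_bij[of "{0..<n} - K" "{0..<n} - I"] I K c
    by (auto simp: card_Diff_subset fI fK)
  define \<pi> where "\<pi> x = (if x \<in> K then f1 x else if x < n then f2 x else x)" for x
  have "bij_betw \<pi> K I" using b1 by (rule bij_betw_cong[THEN iffD1, rotated]) (auto simp: \<pi>_def)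
  moreover have "bij_betw \<pi> ({0..<n} - K) ({0..<n} - I)"
    using b2 by (rule bij_betw_cong[THEN iffD1, rotated]) (auto simp: \<pi>_def)
  ultimately have "bij_betw \<pi> (K \<union> ({0..<n} - K)) (I \<union> ({0..<n} - I))"
    by (rule bij_betw_combine) auto
  moreover have "K \<union> ({0..<n} - K) = {0..<n}" "I \<union> ({0..<n} - I) = {0..<n}" using I K by auto
  ultimately have "bij_betw \<pi> {0..<n} {0..<n}" by simp
  hence perm: "\<pi> permutes {0..<n}"
    by (rule bij_imp_permutes) (use K in \<open>auto simp: \<pi>_def\<close>)
  have "\<pi> (pick K a) = pick I a" if a: "a < card K" for a
  proof -
    have "pick K a \<in> K" using pick_in_set a by auto
    moreover have "card {y\<in>K. y < pick K a} = a" using card_pick a by auto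
    ultimately show ?thesis by (simp add: \<pi>_def f1_def)
  qed
  with perm show ?thesis by blast
qed



lemma signof_cases: "(signof p :: 'a::comm_ring_1) = 1 \<or> signof p = -1"
  by (simp add: sign_def)

lemma const_in_Jp: "is_ideal J \<Longrightarrow> x \<in> J \<Longrightarrow> [:x:] \<in> Jp J"
  unfolding Jp_def by (auto simp: coeff_pCons ideal_0 split: nat.splits)

theorem abstract_minor:
  fixes A :: "'a::comm_ring_1 mat"
  assumes J: "is_ideal J" and A: "A \<in> carrier_mat n n"
  and sq: "\<And>a b. a < n \<Longrightarrow> b < n \<Longrightarrow> (A * A) $$ (a,b) \<in> J"
  and tr: "\<And>i. 1 \<le> i \<Longrightarrow> i \<le> n \<Longrightarrow> (\<Sum>S\<in>{S. S \<subseteq> {0..<n} \<and> card S = i}. det (submatrix A S S)) \<in> J"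
  and I: "I \<subseteq> {0..<n}" and K: "K \<subseteq> {0..<n}" and cI: "card I = m" and cK: "card K = m"
  and nm: "n < 2 * m"
  shows "det (submatrix A I K) \<in> J"
proof -
  obtain \<pi> where perm: "\<pi> permutes {0..<n}" and pik: "\<And>a. a < card K \<Longrightarrow> \<pi> (pick K a) = pick I a"
    using exists_perm[OF I K] cI cK by auto
  have plt: "\<pi> i < n" if "i < n" for i using perm that by (simp add: permutes_in_image)
  have pinj: "\<pi> i = \<pi> j \<longleftrightarrow> i = j" for i j using perm by (metis permutes_inj injD)
  define M where "M = Mt n A"
  define N where "N = Nt n A"
  have M: "M \<in> carrier_mat n n" and N: "N \<in> carrier_mat n n" unfolding M_def N_def Mt_def Nt_def by auto
  define M' where "M' = mat n n (\<lambda>(i,j). M $$ (\<pi> i, j))"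
  define N' where "N' = mat n n (\<lambda>(i,j). N $$ (i, \<pi> j))"
  have M': "M' \<in> carrier_mat n n" and N': "N' \<in> carrier_mat n n" unfolding M'_def N'_def by auto
  define c where "c = (monom (-1) 2 :: 'a poly)"
  have MN': "(M' * N') $$ (i,j) - (if i = j then c else 0) \<in> Jp J" if ij: "i < n" "j < n" for i j
  proof -
    have "(M' * N') $$ (i,j) = (\<Sum>l\<in>{0..<n}. M $$ (\<pi> i, l) * N $$ (l, \<pi> j))"
      using ij M N by (simp add: M'_def N'_def scalar_prod_def plt)
    also have "\<dots> = (M * N) $$ (\<pi> i, \<pi> j)"
      using ij M N by (simp add: scalar_prod_def plt)
    also have "\<dots> = [:(A * A) $$ (\<pi> i, \<pi> j):] + (if i = j then c else 0)"
      unfolding M_def N_def c_def using MtNt[OF A plt[OF ij(1)] plt[OF ij(2)]] pinj by simp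
    finally show ?thesis using const_in_Jp[OF J sq[OF plt[OF ij(1)] plt[OF ij(2)]]] by simp
  qed
  define S where "S = {0..<n} - K"
  have S: "S \<subseteq> {0..<n}" unfolding S_def by auto
  have SK: "{0..<n} - S = K" unfolding S_def using K by auto
  have fK: "finite K" using K finite_subset by blast
  define k where "k = card S"
  have k: "k = n - m" unfolding k_def S_def using K cK by (simp add: card_Diff_subset fK)
  have "m \<le> n" using card_mono[OF _ K] cK by simp
  hence kn: "2 * k < n" using k nm by linarith
  have jac: "det M' * det (submatrix N' S S) - c ^ k * det (submatrix M' K K) \<in> Jp J"
    using jacobi_principal[OF Jp_ideal[OF J] M' N' S MN'] SK unfolding k_def by simp
  hence jc: "coeff (det M' * det (submatrix N' S S)) (2 * k) - coeff (c ^ k * det (submatrix M' K K)) (2 * k) \<in> J"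
    unfolding Jp_def by (metis (mono_tags, lifting) coeff_diff mem_Collect_eq)
  have cM: "coeff (det M) i \<in> J" if "i < n" for i
    unfolding M_def coeff_det_Mt[OF A that] using that by (intro tr) auto
  have dM': "det M' = signof \<pi> * det M" unfolding M'_def by (rule det_permute_rows[OF M perm])
  have cM': "coeff (det M') i \<in> J" if "i < n" for i
  proof (cases "(signof \<pi> :: 'a poly) = 1")
    case True then show ?thesis using cM[OF that] unfolding dM' by simp
  next
    case False
    have "(signof \<pi> :: 'a poly) = 1 \<or> (signof \<pi> :: 'a poly) = -1" by (rule signof_cases)
    hence "(signof \<pi> :: 'a poly) = -1" using False by blast
    then show ?thesis using cM[OF that] ideal_uminus[OF J] unfolding dM' by simp
  qed
  have l1: "coeff (det M' * det (submatrix N' S S)) (2 * k) \<in> J"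
    unfolding coeff_mult using kn by (intro ideal_sum[OF J] ideal_mult2[OF J] cM') auto
  have l2: "coeff (c ^ k * det (submatrix M' K K)) (2 * k) = (-1) ^ k * coeff (det (submatrix M' K K)) 0"
    unfolding c_def monom_power coeff_monom_mult by (simp add: mult.commute)
  have "(-1) ^ k * coeff (det (submatrix M' K K)) 0 \<in> J"
    using ideal_diff[OF J l1 jc] l2 by simp
  from ideal_mult[OF J this, of "(-1)^k"]
  have c0: "coeff (det (submatrix M' K K)) 0 \<in> J" by (simp flip: power_mult_distrib)
  have "coeff (det (submatrix M' K K)) 0 = det (map_mat (\<lambda>p. poly p 0) (submatrix M' K K))"
    unfolding comm_ring_hom.hom_det[OF ev0_hom] by (simp add: poly_0_coeff_0)
  also have "map_mat (\<lambda>p. poly p 0) (submatrix M' K K) = submatrix A I K"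
  proof (rule eq_matI)
    show "dim_row (map_mat (\<lambda>p. poly p 0) (submatrix M' K K)) = dim_row (submatrix A I K)"
         "dim_col (map_mat (\<lambda>p. poly p 0) (submatrix M' K K)) = dim_col (submatrix A I K)"
      using dim_submatrix_sub[OF M' K K] dim_submatrix_sub[OF A I K] cI cK by simp_all
    fix a b assume ab: "a < dim_row (submatrix A I K)" "b < dim_col (submatrix A I K)"
    hence ab': "a < card K" "b < card K" "a < card I" using dim_submatrix_sub[OF A I K] cI cK by auto
    have p: "pick K a \<in> K" "pick K b \<in> K" "pick I a \<in> I"
      using pick_in_set[of a K] pick_in_set[of b K] pick_in_set[of a I] ab' by auto
    hence lt: "pick K a < n" "pick K b < n" "pick I a < n" using K I by auto
    have "map_mat (\<lambda>p. poly p 0) (submatrix M' K K) $$ (a, b) = poly (M' $$ (pick K a, pick K b)) 0"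
      using ab' submatrix_index_sub[OF M' K K ab'(1,2)] dim_submatrix_sub[OF M' K K] by simp
    also have "\<dots> = A $$ (pick I a, pick K b)"
      using lt pik[OF ab'(1)] by (simp add: M'_def M_def Mt_def plt)
    also have "\<dots> = submatrix A I K $$ (a, b)"
      using submatrix_index_sub[OF A I K ab'(3,2)] by simp
    finally show "map_mat (\<lambda>p. poly p 0) (submatrix M' K K) $$ (a, b) = submatrix A I K $$ (a, b)" .
  qed
  finally show ?thesis using c0 by simp
qed



lemma sum_restrict_sub:
  assumes "finite S" "S1 \<subseteq> S"
  shows "(\<Sum>g\<in>S. if g \<in> S1 then f g else 0) = (\<Sum>g\<in>S1. f g)"
proof -
  have "(\<Sum>g\<in>S. if g \<in> S1 then f g else 0) = (\<Sum>g\<in>{g\<in>S. g \<in> S1}. f g)"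
    by (rule sum.inter_filter[symmetric]) fact
  also have "{g\<in>S. g \<in> S1} = S1" using assms by auto
  finally show ?thesis .
qed

lemma ideal_gen_ideal: "is_ideal (ideal_gen G)"
  unfolding is_ideal_def
proof (intro conjI ballI allI)
  show "0 \<in> ideal_gen G" unfolding ideal_gen_def by (rule CollectI, rule exI[of _ "{}"]) auto
next
  fix x y assume x: "x \<in> ideal_gen G" and y: "y \<in> ideal_gen G"
  obtain S1 c1 where 1: "finite S1" "S1 \<subseteq> G" "x = (\<Sum>g\<in>S1. c1 g * g)" using x unfolding ideal_gen_def by auto
  obtain S2 c2 where 2: "finite S2" "S2 \<subseteq> G" "y = (\<Sum>g\<in>S2. c2 g * g)" using y unfolding ideal_gen_def by auto
  define c where "c g = (if g \<in> S1 then c1 g else 0) + (if g \<in> S2 then c2 g else 0)" for g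
  have fin: "finite (S1 \<union> S2)" using 1 2 by auto
  have "(\<Sum>g\<in>S1 \<union> S2. c g * g) = (\<Sum>g\<in>S1 \<union> S2. if g \<in> S1 then c1 g * g else 0) + (\<Sum>g\<in>S1 \<union> S2. if g \<in> S2 then c2 g * g else 0)"
  proof -
    have "c g * g = (if g \<in> S1 then c1 g * g else 0) + (if g \<in> S2 then c2 g * g else 0)" for g
      unfolding c_def by (simp add: distrib_right)
    thus ?thesis by (simp only: sum.distrib)
  qed
  also have "\<dots> = x + y" using sum_restrict_sub[OF fin, of S1 "\<lambda>g. c1 g * g"] sum_restrict_sub[OF fin, of S2 "\<lambda>g. c2 g * g"] 1 2 by simp
  finally have e: "x + y = (\<Sum>g\<in>S1 \<union> S2. c g * g)" by simp
  show "x + y \<in> ideal_gen G" unfolding ideal_gen_def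
    by (rule CollectI, rule exI[of _ "S1 \<union> S2"], rule exI[of _ c]) (use 1 2 fin e in simp)
next
  fix x r assume x: "x \<in> ideal_gen G"
  obtain S1 c1 where 1: "finite S1" "S1 \<subseteq> G" "x = (\<Sum>g\<in>S1. c1 g * g)" using x unfolding ideal_gen_def by auto
  have "r * x = (\<Sum>g\<in>S1. (r * c1 g) * g)" unfolding 1 by (simp add: sum_distrib_left mult.assoc)
  thus "r * x \<in> ideal_gen G" unfolding ideal_gen_def
    by (intro CollectI exI[of _ S1] exI[of _ "\<lambda>g. r * c1 g"]) (use 1 in simp)
qed

lemma ideal_gen_base: "g \<in> G \<Longrightarrow> g \<in> ideal_gen G"
  unfolding ideal_gen_def by (rule CollectI, rule exI[of _ "{g}"], rule exI[of _ "\<lambda>_. 1"]) auto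

theorem lemma4:
  fixes n :: nat and I J :: "nat set"
  assumes "n \<ge> 1"
    and "I \<subseteq> {0..<n}" and "J \<subseteq> {0..<n}"
    and "card I = n div 2 + 1" and "card J = n div 2 + 1"
  shows "(det (submatrix (generic_mat n) I J) :: 'a::field mpoly)
           \<in> ideal_gen ({T_coef n i | i. 1 \<le> i \<and> i \<le> n}
                        \<union> {(generic_mat n * generic_mat n) $$ (a, b) | a b. a < n \<and> b < n})"
proof -
  let ?G = "({T_coef n i | i. 1 \<le> i \<and> i \<le> n}
                        \<union> {(generic_mat n * generic_mat n) $$ (a, b) | a b. a < n \<and> b < n}) :: 'a mpoly set"
  have A: "(generic_mat n :: 'a mpoly mat) \<in> carrier_mat n n" unfolding generic_mat_def by simp
  show ?thesis
  proof (rule abstract_minor[OF ideal_gen_ideal A _ _ assms(2,3,4,5)])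
    fix a b assume "a < n" "b < n"
    thus "(generic_mat n * generic_mat n) $$ (a, b) \<in> ideal_gen ?G" by (intro ideal_gen_base) blast
  next
    fix i assume "1 \<le> i" "i \<le> n"
    hence "T_coef n i \<in> ?G" by blast
    thus "(\<Sum>S\<in>{S. S \<subseteq> {0..<n} \<and> card S = i}. det (submatrix (generic_mat n) S S)) \<in> ideal_gen ?G"
      unfolding T_coef_def by (rule ideal_gen_base)
  next
    show "n < 2 * (n div 2 + 1)" by presburger
  qed
qed


end
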